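(* Let $n\ge2$ and let $X_1,\dots,X_n$ be independent normal random variables with means $\mu_1,\dots,\mu_n\ge0$. Then $$\mathbb{E}\max(X_1,\dots,X_n)\ge(1-2^{1-n})\,\mathbb{E}\max(0,X_1,\dots,X_n).$$ *)

theory Defs
  imports "HOL-Probability.Probability"
begin

end

theory Submission imports Defs begin

lemma half_lemma:
  assumes P: "prob_space M" and D: "distributed M lborel X (normal_density \<mu> \<sigma>)"
    and s: "0 < \<sigma>" and m: "0 \<le> \<mu>"
  shows "measure M {\<omega>\<in>space M. X \<omega> < 0} \<le> 1/2"
proof -
  interpret prob_space M by (rule P)
  have D2: "distributed M lborel (\<lambda>\<omega>. 2*\<mu> + (-1) * X \<omega>) (normal_density \<mu> \<sigma>)"
    using normal_density_affine[OF D s, of "-1" "2*\<mu>"] by simp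
  have Xm[measurable]: "X \<in> borel_measurable M"
    using distributed_measurable[OF D] by simp
  have "emeasure M (X -` {..<0} \<inter> space M) = emeasure M ((\<lambda>\<omega>. 2*\<mu> + (-1) * X \<omega>) -` {..<0} \<inter> space M)"
    using distributed_emeasure[OF D, of "{..<0}"] distributed_emeasure[OF D2, of "{..<0}"] by simp
  then have e: "prob {\<omega>\<in>space M. X \<omega> < 0} = prob {\<omega>\<in>space M. X \<omega> > 2*\<mu>}"
    unfolding measure_def by (simp add: vimage_def Int_def conj_commute)
  have "prob {\<omega>\<in>space M. X \<omega> > 2*\<mu>} \<le> prob {\<omega>\<in>space M. \<not> X \<omega> < 0}"
    using m by (intro finite_measure_mono) auto
  also have "\<dots> = 1 - prob {\<omega>\<in>space M. X \<omega> < 0}"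
    by (rule prob_neg) simp
  finally show ?thesis using e by simp
qed
theorem lemma9:
  fixes M :: "'a measure" and X :: "nat \<Rightarrow> 'a \<Rightarrow> real"
    and \<mu> \<sigma> :: "nat \<Rightarrow> real" and n :: nat
  assumes "prob_space M"
    and "n \<ge> 2"
    and "prob_space.indep_vars M (\<lambda>_. borel) X {1..n}"
    and "\<And>i. i \<in> {1..n} \<Longrightarrow> 0 < \<sigma> i"
    and "\<And>i. i \<in> {1..n} \<Longrightarrow> 0 \<le> \<mu> i"
    and "\<And>i. i \<in> {1..n} \<Longrightarrow> distributed M lborel (X i) (normal_density (\<mu> i) (\<sigma> i))"
  shows "prob_space.expectation M (\<lambda>\<omega>. Max ((\<lambda>i. X i \<omega>) ` {1..n}))
           \<ge> (1 - 2 powr (1 - real n)) *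
             prob_space.expectation M (\<lambda>\<omega>. max 0 (Max ((\<lambda>i. X i \<omega>) ` {1..n})))"
proof -
  interpret prob_space M by (rule assms(1))
  define S where "S = {1..n}"
  define Mx where "Mx \<omega> = Max ((\<lambda>i. X i \<omega>) ` S)" for \<omega>
  have S1: "1 \<in> S" and Sfin: "finite S" and Sne: "S \<noteq> {}" using assms(2) by (auto simp: S_def)
  have rv[measurable]: "X i \<in> borel_measurable M" if "i \<in> S" for i
    using distributed_measurable[OF assms(6)] that by (simp add: S_def)
  have intX: "integrable M (X i)" if "i \<in> S" for i
    using that assms(4,6) by (intro distributed_integrable_var[OF assms(6)] integrable_normal_moment_nz_1) (auto simp: S_def)
  have Mxm[measurable]: "Mx \<in> borel_measurable M"
    unfolding Mx_def using Sfin rv by (intro borel_measurable_Max) auto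
  have Mxin: "Mx \<omega> \<in> (\<lambda>i. X i \<omega>) ` S" for \<omega>
    unfolding Mx_def using Sfin Sne by (intro Max_in) auto
  have Mxge: "X i \<omega> \<le> Mx \<omega>" if "i \<in> S" for i \<omega>
    unfolding Mx_def using Sfin that by (intro Max_ge) auto
  have intMx: "integrable M Mx"
  proof (rule Bochner_Integration.integrable_bound)
    show "integrable M (\<lambda>\<omega>. \<Sum>i\<in>S. \<bar>X i \<omega>\<bar>)" using intX by auto
    show "AE \<omega> in M. norm (Mx \<omega>) \<le> norm (\<Sum>i\<in>S. \<bar>X i \<omega>\<bar>)"
    proof (intro AE_I2)
      fix \<omega> obtain j where j: "j \<in> S" "Mx \<omega> = X j \<omega>" using Mxin[of \<omega>] by auto
      have "\<bar>X j \<omega>\<bar> \<le> (\<Sum>i\<in>S. \<bar>X i \<omega>\<bar>)" using j Sfin by (intro member_le_sum) auto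
      then show "norm (Mx \<omega>) \<le> norm (\<Sum>i\<in>S. \<bar>X i \<omega>\<bar>)" using j by (simp add: sum_nonneg)
    qed
  qed simp
  define P where "P \<omega> = max 0 (Mx \<omega>)" for \<omega>
  define N where "N \<omega> = max 0 (- Mx \<omega>)" for \<omega>
  have intP: "integrable M P" unfolding P_def using intMx by auto
  have intN: "integrable M N" unfolding N_def using intMx by auto
  have splitE: "expectation Mx = expectation P - expectation N"
  proof -
    have "Mx = (\<lambda>\<omega>. P \<omega> - N \<omega>)" by (auto simp: P_def N_def fun_eq_iff)
    then show ?thesis using intP intN by simp
  qed
  define Y where "Y i \<omega> = (if i = 1 then max 0 (- X 1 \<omega>) else indicator {..<0} (X i \<omega>))" for i \<omega>
  have indY: "indep_vars (\<lambda>_. borel) Y S"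
  proof -
    have "indep_vars (\<lambda>_. borel) (\<lambda>i x. (\<lambda>y. if i = 1 then max 0 (- y) else indicator {..<(0::real)} y) (X i x)) S"
      by (rule indep_vars_compose2[OF assms(3)[folded S_def]]) auto
    then show ?thesis unfolding Y_def by (simp add: if_distrib cong: if_cong)
  qed
  have intY: "integrable M (Y i)" if "i \<in> S" for i
  proof (cases "i = 1")
    case True then show ?thesis unfolding Y_def using intX[OF S1] by simp
  next
    case False
    have "(\<lambda>\<omega>. indicator {..<0} (X i \<omega>) :: real) \<in> borel_measurable M" using that by measurable
    then show ?thesis unfolding Y_def using False
      by (intro integrable_const_bound[where B=1]) (auto simp: indicator_def)
  qed
  have EYi: "expectation (Y i) = prob {\<omega>\<in>space M. X i \<omega> < 0}" if "i \<in> S" "i \<noteq> 1" for i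
  proof -
    have "expectation (Y i) = expectation (indicator {\<omega>\<in>space M. X i \<omega> < 0})"
      using that by (intro Bochner_Integration.integral_cong) (auto simp: Y_def indicator_def)
    also have "\<dots> = prob {\<omega>\<in>space M. X i \<omega> < 0}"
    proof -
      have "{\<omega>\<in>space M. X i \<omega> < 0} \<in> sets M" using that by measurable
      then show ?thesis by (simp add: integral_indicator)
    qed
    finally show ?thesis .
  qed
  have half: "prob {\<omega>\<in>space M. X i \<omega> < 0} \<le> 1/2" if "i \<in> S" for i
    using that assms(4,5,6) by (intro half_lemma[OF assms(1)]) (auto simp: S_def)
  have EY1: "expectation (Y 1) \<le> expectation P"
  proof -
    have "expectation (\<lambda>\<omega>. max 0 (X 1 \<omega>)) - expectation (Y 1) = expectation (X 1)"
    proof -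
      have eq: "X 1 = (\<lambda>\<omega>. max 0 (X 1 \<omega>) - Y 1 \<omega>)" by (auto simp: Y_def fun_eq_iff)
      have "expectation (\<lambda>\<omega>. max 0 (X 1 \<omega>) - Y 1 \<omega>) = expectation (\<lambda>\<omega>. max 0 (X 1 \<omega>)) - expectation (Y 1)"
        using intX[OF S1] intY[OF S1] by (intro Bochner_Integration.integral_diff) auto
      then show ?thesis using eq by metis
    qed
    also have "\<dots> = \<mu> 1" using assms(4,6) S1 by (intro normal_distributed_expectation[of "\<sigma> 1"]) (auto simp: S_def)
    finally have "expectation (Y 1) \<le> expectation (\<lambda>\<omega>. max 0 (X 1 \<omega>))" using assms(5)[of 1] S1 by (simp add: S_def)
    also have "\<dots> \<le> expectation P"
    proof (rule integral_mono[OF _ intP])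
      show "integrable M (\<lambda>\<omega>. max 0 (X 1 \<omega>))" using intX[OF S1] by auto
      show "max 0 (X 1 \<omega>) \<le> P \<omega>" for \<omega> unfolding P_def by (intro max.mono order.refl Mxge[OF S1])
    qed
    finally show ?thesis .
  qed
  have pw: "N \<omega> \<le> (\<Prod>i\<in>S. Y i \<omega>)" for \<omega>
  proof (cases "Mx \<omega> < 0")
    case True
    have "(\<Prod>i\<in>S. Y i \<omega>) = Y 1 \<omega> * (\<Prod>i\<in>S-{1}. Y i \<omega>)" using S1 Sfin by (simp add: prod.remove)
    also have "(\<Prod>i\<in>S-{1}. Y i \<omega>) = 1"
      using True Mxge by (intro prod.neutral) (auto simp: Y_def indicator_def intro: le_less_trans)
    finally show ?thesis using True Mxge[OF S1, of \<omega>] by (simp add: N_def Y_def)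
  next
    case False
    then show ?thesis by (auto simp: N_def Y_def intro!: prod_nonneg)
  qed
  have EN: "expectation N \<le> expectation (\<lambda>\<omega>. \<Prod>i\<in>S. Y i \<omega>)"
    using pw intN indep_vars_integrable[OF Sfin indY intY] by (intro integral_mono) auto
  also have "\<dots> = (\<Prod>i\<in>S. expectation (Y i))"
    by (rule indep_vars_lebesgue_integral[OF Sfin indY intY])
  also have "\<dots> = expectation (Y 1) * (\<Prod>i\<in>S-{1}. expectation (Y i))"
    using S1 Sfin by (simp add: prod.remove)
  also have "\<dots> \<le> expectation (Y 1) * (\<Prod>i\<in>S-{1}. 1/2)"
  proof (rule mult_left_mono)
    show "0 \<le> expectation (Y 1)" unfolding Y_def by simp
    show "(\<Prod>i\<in>S-{1}. expectation (Y i)) \<le> (\<Prod>i\<in>S-{1}. 1/2)"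
    proof (rule prod_mono)
      fix i assume i: "i \<in> S-{1}"
      then have "expectation (Y i) = prob {\<omega>\<in>space M. X i \<omega> < 0}" using EYi by blast
      then show "0 \<le> expectation (Y i) \<and> expectation (Y i) \<le> 1/2" using half[of i] i by simp
    qed
  qed
  also have "\<dots> = expectation (Y 1) * (1/2)^(n-1)"
    using assms(2) by (simp add: S_def)
  also have "\<dots> \<le> expectation P * (1/2)^(n-1)"
    using EY1 by (rule mult_right_mono) simp
  finally have EN2: "expectation N \<le> expectation P * (1/2)^(n-1)" .
  have pw2: "2 powr (1 - real n) = (1/2)^(n-1)"
  proof -
    have "1 - real n = - real (n - 1)" using assms(2) by simp
    then have "2 powr (1 - real n) = inverse (2 powr real (n - 1))" by (simp only: powr_minus)
    also have "2 powr real (n - 1) = (2::real) ^ (n - 1)" by (rule powr_realpow) simp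
    finally show ?thesis by (simp add: power_one_over inverse_eq_divide)
  qed
  have "0 \<le> expectation P" unfolding P_def by simp
  have eqq: "(1 - (1/2)^(n-1)) * expectation P = expectation P - expectation P * (1/2)^(n-1)"
    by (simp add: algebra_simps)
  have fin: "expectation Mx \<ge> (1 - 2 powr (1 - real n)) * expectation P"
    unfolding pw2 eqq splitE using EN2 by linarith
  have e1: "Mx = (\<lambda>\<omega>. Max ((\<lambda>i. X i \<omega>) ` {1..n}))" by (simp add: Mx_def S_def fun_eq_iff)
  have e2: "P = (\<lambda>\<omega>. max 0 (Max ((\<lambda>i. X i \<omega>) ` {1..n})))" by (simp add: P_def Mx_def S_def fun_eq_iff)
  show ?thesis using fin unfolding e1 e2 .
qed

end
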